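(* Let $K$ be a field of characteristic $0$, let $L=\mathcal{L}(x,y)$ be the free Lie algebra over $K$ freely generated by $x,y$, let $\delta$ be the derivation of $L$ with $\delta(x)=0$, $\delta(y)=x$, and $L^\delta=\ker\delta$. Every element of $L^\delta$ of degree at most $7$ belongs to the Lie subalgebra of $L$ generated by $x$, $[y,x]$ and $[[y,x,y],[y,x,x]]$.
   Context: Brackets are left-normed: $[a_1,a_2,\ldots,a_n]=[[\ldots[a_1,a_2],\ldots],a_n]$. *)

theory Defs
  imports Main
begin

datatype gen = GX | GY

text \<open>Elements of the free associative algebra K<x,y>, as coefficient functions
  on words (noncommutative polynomials). The free Lie algebra L(x,y) is realised as
  the Lie subalgebra of K<x,y> (with commutator bracket) generated by x and y.\<close>
type_synonym 'k ncpoly = "gen list \<Rightarrow> 'k"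

definition nc_gen :: "gen \<Rightarrow> 'k::field ncpoly" where
  "nc_gen g = (\<lambda>w. if w = [g] then 1 else 0)"

definition nc_add :: "'k::field ncpoly \<Rightarrow> 'k ncpoly \<Rightarrow> 'k ncpoly" where
  "nc_add p q = (\<lambda>w. p w + q w)"

definition nc_smult :: "'k::field \<Rightarrow> 'k ncpoly \<Rightarrow> 'k ncpoly" where
  "nc_smult c p = (\<lambda>w. c * p w)"

definition nc_mult :: "'k::field ncpoly \<Rightarrow> 'k ncpoly \<Rightarrow> 'k ncpoly" where
  "nc_mult p q = (\<lambda>w. \<Sum>i\<le>length w. p (take i w) * q (drop i w))"

definition nc_bracket :: "'k::field ncpoly \<Rightarrow> 'k ncpoly \<Rightarrow> 'k ncpoly" where
  "nc_bracket p q = (\<lambda>w. nc_mult p q w - nc_mult q p w)"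

inductive_set lie_gen :: "'k::field ncpoly set \<Rightarrow> 'k ncpoly set" for S where
  base: "p \<in> S \<Longrightarrow> p \<in> lie_gen S"
| add: "p \<in> lie_gen S \<Longrightarrow> q \<in> lie_gen S \<Longrightarrow> nc_add p q \<in> lie_gen S"
| smult: "p \<in> lie_gen S \<Longrightarrow> nc_smult c p \<in> lie_gen S"
| bracket: "p \<in> lie_gen S \<Longrightarrow> q \<in> lie_gen S \<Longrightarrow> nc_bracket p q \<in> lie_gen S"

definition free_lie :: "'k::field ncpoly set" where
  "free_lie = lie_gen {nc_gen GX, nc_gen GY}"

text \<open>The derivation delta with delta(x)=0, delta(y)=x (extended to K<x,y>,
  restricting to the unique such derivation of L): a word maps to the sum of the
  words obtained by replacing one occurrence of y by x.\<close>
definition delta :: "'k::field ncpoly \<Rightarrow> 'k ncpoly" where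
  "delta p = (\<lambda>w. \<Sum>i\<in>{i. i < length w \<and> w ! i = GX}. p (w[i := GY]))"

definition deg_le :: "nat \<Rightarrow> 'k::field ncpoly \<Rightarrow> bool" where
  "deg_le d p \<longleftrightarrow> (\<forall>w. d < length w \<longrightarrow> p w = 0)"

end

theory Submission
  imports Defs
begin

lemma sum_atMost_Suc_shift': "(\<Sum>i\<le>Suc n. f i) = f 0 + (\<Sum>i\<le>n. f (Suc i))"
  by (rule sum.atMost_Suc_shift)

lemma nc_mult_Nil: "nc_mult p q [] = p [] * q []"
  by (simp add: nc_mult_def)

lemma nc_mult_Cons: "nc_mult p q (g#w) = p [] * q (g#w) + nc_mult (\<lambda>v. p (g#v)) q w"
  unfolding nc_mult_def by (simp add: sum.atMost_Suc_shift del: sum.atMost_Suc)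

lemma nc_mult_addL: "nc_mult (\<lambda>v. f v + h v) q w = nc_mult f q w + nc_mult h q w"
  unfolding nc_mult_def by (simp add: distrib_right sum.distrib)

lemma nc_mult_addR: "nc_mult q (\<lambda>v. f v + h v) w = nc_mult q f w + nc_mult q h w"
  unfolding nc_mult_def by (simp add: distrib_left sum.distrib)

lemma nc_mult_diffL: "nc_mult (\<lambda>v. f v - h v) q w = nc_mult f q w - nc_mult h q w"
  unfolding nc_mult_def by (simp add: left_diff_distrib sum_subtractf)

lemma nc_mult_diffR: "nc_mult q (\<lambda>v. f v - h v) w = nc_mult q f w - nc_mult q h w"
  unfolding nc_mult_def by (simp add: right_diff_distrib sum_subtractf)

lemma nc_mult_scL: "nc_mult (\<lambda>v. c * f v) q w = c * nc_mult f q w"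
  unfolding nc_mult_def by (simp add: sum_distrib_left mult.assoc)

lemma nc_mult_scR: "nc_mult q (\<lambda>v. c * f v) w = c * nc_mult q f w"
  unfolding nc_mult_def by (simp add: sum_distrib_left algebra_simps)

lemma nc_mult_assoc: "nc_mult (nc_mult p q) r w = nc_mult p (nc_mult q r) w"
proof (induction w arbitrary: p)
  case Nil
  then show ?case by (simp add: nc_mult_Nil)
next
  case (Cons g w)
  have d: "(\<lambda>v. nc_mult p q (g#v)) = (\<lambda>v. p [] * q (g#v) + nc_mult (\<lambda>v. p (g#v)) q v)"
    by (simp add: nc_mult_Cons)
  show ?case
    apply (simp add: nc_mult_Cons nc_mult_Nil d nc_mult_addL nc_mult_scL Cons.IH)
    by (simp add: algebra_simps)
qed

lemma nc_mult_assoc_fun: "nc_mult (nc_mult p q) r = nc_mult p (nc_mult q r)"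
  using nc_mult_assoc by blast

lemma jacobi: "nc_bracket a (nc_bracket b c) w =
   nc_bracket (nc_bracket a b) c w - nc_bracket (nc_bracket a c) b w"
  unfolding nc_bracket_def
  by (simp add: nc_mult_diffL nc_mult_diffR nc_mult_assoc_fun)

datatype tr = E | T int tr tr

fun lk :: "tr \<Rightarrow> gen list \<Rightarrow> int" where
  "lk E w = 0"
| "lk (T c a b) w = (case w of [] \<Rightarrow> c | g#v \<Rightarrow> lk (if g = GX then a else b) v)"

definition evt :: "tr \<Rightarrow> 'k::field ncpoly" where
  "evt t = (\<lambda>w. of_int (lk t w))"

fun tadd :: "tr \<Rightarrow> tr \<Rightarrow> tr" where
  "tadd E t = t"
| "tadd t E = t"
| "tadd (T c a b) (T d e f) = T (c+d) (tadd a e) (tadd b f)"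

lemma lk_tadd[simp]: "lk (tadd s t) w = lk s w + lk t w"
  by (induction s t arbitrary: w rule: tadd.induct) (auto split: list.split)

fun tsc :: "int \<Rightarrow> tr \<Rightarrow> tr" where
  "tsc c E = E"
| "tsc c (T d a b) = T (c*d) (tsc c a) (tsc c b)"

lemma lk_tsc[simp]: "lk (tsc c t) w = c * lk t w"
  by (induction t arbitrary: w) (auto split: list.split)

fun tmult :: "tr \<Rightarrow> tr \<Rightarrow> tr" where
  "tmult E Q = E"
| "tmult (T c a b) Q = tadd (tsc c Q) (T 0 (tmult a Q) (tmult b Q))"

lemma lk_tmult: "lk (tmult P Q) w = (\<Sum>i\<le>length w. lk P (take i w) * lk Q (drop i w))"
proof (induction P arbitrary: w)
  case E
  then show ?case by simp
next
  case (T c a b)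
  show ?case
  proof (cases w)
    case Nil
    then show ?thesis by simp
  next
    case (Cons g v)
    show ?thesis
      using T.IH[of v] by (simp add: Cons sum.atMost_Suc_shift del: sum.atMost_Suc)
  qed
qed

lemma evt_tmult: "evt (tmult P Q) = (nc_mult (evt P) (evt Q) :: 'k::field ncpoly)"
  unfolding evt_def nc_mult_def by (simp add: lk_tmult)

definition tbr :: "tr \<Rightarrow> tr \<Rightarrow> tr" where
  "tbr P Q = tadd (tmult P Q) (tsc (-1) (tmult Q P))"

lemma evt_tbr: "evt (tbr P Q) = (nc_bracket (evt P) (evt Q) :: 'k::field ncpoly)"
proof -
  have "evt (tbr P Q) = (\<lambda>w. (evt (tmult P Q) w - evt (tmult Q P) w) :: 'k)"
    unfolding tbr_def evt_def by simp
  then show ?thesis unfolding evt_tmult nc_bracket_def by simp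
qed

lemma evt_tadd: "evt (tadd P Q) = (nc_add (evt P) (evt Q) :: 'k::field ncpoly)"
  unfolding evt_def nc_add_def by simp

lemma evt_tsc: "evt (tsc c P) = (nc_smult (of_int c) (evt P) :: 'k::field ncpoly)"
  unfolding evt_def nc_smult_def by simp

lemma evt_E: "evt E = (\<lambda>w. 0)"
  unfolding evt_def by simp

fun tdelta :: "tr \<Rightarrow> tr" where
  "tdelta E = E"
| "tdelta (T c a b) = T 0 (tadd b (tdelta a)) (tdelta b)"

lemma deltaS: "delta p w = (\<Sum>i<length w. if w!i = GX then p (w[i:=GY]) else 0)"
proof -
  have "{i. i < length w \<and> w ! i = GX} = {i \<in> {..<length w}. w!i = GX}" by auto
  then have "delta p w = (\<Sum>i\<in>{i \<in> {..<length w}. w!i = GX}. p (w[i:=GY]))"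
    unfolding delta_def by simp
  also have "\<dots> = (\<Sum>i<length w. if w!i = GX then p (w[i:=GY]) else 0)"
    by (rule sum.inter_filter) simp
  finally show ?thesis .
qed

lemma upd_Suc: "(g#w)[Suc i := v] = g # w[i:=v]" by simp

lemma delta_Cons: "delta p (g#w) = (if g = GX then p (GY#w) else 0) + delta (\<lambda>v. p (g#v)) w"
  unfolding deltaS by (simp add: sum.lessThan_Suc_shift upd_Suc del: sum.lessThan_Suc cong: if_cong)

lemma delta_Nil: "delta p [] = 0"
  unfolding deltaS by simp

lemma lk_tdelta: "lk (tdelta t) w = (\<Sum>i<length w. if w!i = GX then lk t (w[i:=GY]) else 0)"
proof (induction t arbitrary: w)
  case E
  then show ?case by (simp cong: if_cong)
next
  case (T c a b)
  show ?case
  proof (cases w)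
    case Nil
    then show ?thesis by simp
  next
    case (Cons g v)
    show ?thesis
      using T.IH(1)[of v] T.IH(2)[of v]
      by (cases g) (simp_all add: Cons sum.lessThan_Suc_shift upd_Suc del: sum.lessThan_Suc cong: if_cong)
  qed
qed

lemma evt_tdelta: "delta (evt t) = (evt (tdelta t) :: 'k::field ncpoly)"
  unfolding evt_def by (rule ext) (simp add: deltaS lk_tdelta of_int_sum if_distrib cong: if_cong)

lemma gen_neqX[simp]: "(x \<noteq> GX) = (x = GY)" by (cases x) auto
lemma gen_neqY[simp]: "(x \<noteq> GY) = (x = GX)" by (cases x) auto

definition tgen :: "gen \<Rightarrow> tr" where
  "tgen g = (if g = GX then T 0 (T 1 E E) E else T 0 E (T 1 E E))"

lemma evt_tgen: "evt (tgen g) = (nc_gen g :: 'k::field ncpoly)"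
  unfolding evt_def nc_gen_def tgen_def
  by (rule ext, cases g) (auto split: list.split)

fun lnbT :: "gen list \<Rightarrow> tr" where
  "lnbT [] = E"
| "lnbT (g#r) = foldl (\<lambda>P h. tbr P (tgen h)) (tgen g) r"

fun allwords :: "nat \<Rightarrow> gen list list" where
  "allwords 0 = [[]]"
| "allwords (Suc n) = map ((#) GX) (allwords n) @ map ((#) GY) (allwords n)"

definition Zl :: "nat \<Rightarrow> gen list list" where
  "Zl n = (if n = 1 then [[GX],[GY]] else map (\<lambda>r. GX # GY # r) (allwords (n - 2)))"

datatype agen = AX | AU | AW

fun adense :: "agen \<Rightarrow> tr" where
  "adense AX = tgen GX"
| "adense AU = tbr (tgen GY) (tgen GX)"
| "adense AW = tbr (tbr (tbr (tgen GY) (tgen GX)) (tgen GY)) (tbr (tbr (tgen GY) (tgen GX)) (tgen GX))"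

fun lnA :: "agen list \<Rightarrow> tr" where
  "lnA [] = E"
| "lnA (a#s) = foldl (\<lambda>P b. tbr P (adense b)) (adense a) s"

definition gexp :: "(int \<times> agen list) list \<Rightarrow> tr" where
  "gexp ge = foldr (\<lambda>(c,s) t. tadd (tsc c (lnA s)) t) ge E"

definition tsc' :: "int \<Rightarrow> tr \<Rightarrow> tr" where
  "tsc' c t = (if c = 0 then E else tsc c t)"

fun tzero :: "tr \<Rightarrow> bool" where
  "tzero E = True"
| "tzero (T c a b) = (c = 0 \<and> tzero a \<and> tzero b)"

definition rhs :: "tr \<Rightarrow> tr \<Rightarrow> gen list list \<Rightarrow> tr list \<Rightarrow> gen list list \<Rightarrow> tr list \<Rightarrow> tr" where
  "rhs L dL Ws Gs Wps Ms =
     foldr tadd (map2 (\<lambda>w G. tsc' (lk L w) G) Ws Gs @ map2 (\<lambda>w M. tsc' (lk dL w) M) Wps Ms) E"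

definition checkz :: "int \<Rightarrow> gen list list \<Rightarrow> tr list \<Rightarrow> gen list list \<Rightarrow> tr list \<Rightarrow> tr \<Rightarrow> tr \<Rightarrow> bool" where
  "checkz N Ws Gs Wps Ms L dL = tzero (tadd (tsc N L) (tsc (-1) (rhs L dL Ws Gs Wps Ms)))"

definition checkzs :: "int \<Rightarrow> gen list list \<Rightarrow> tr list \<Rightarrow> gen list list \<Rightarrow> tr list \<Rightarrow> gen list list \<Rightarrow> bool" where
  "checkzs N Ws Gs Wps Ms Zs = list_all (\<lambda>z. checkz N Ws Gs Wps Ms (lnbT z) (tdelta (lnbT z))) Zs"

definition check :: "int \<Rightarrow> gen list list \<Rightarrow> gen list list \<Rightarrow> (int \<times> agen list) list list \<Rightarrow> gen list list \<Rightarrow> tr list \<Rightarrow> bool" where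
  "check N Zs Ws GE Wps Ms = (N \<noteq> 0 \<and> checkzs N Ws (map gexp GE) Wps Ms Zs)"

definition cW1 :: "gen list list" where "cW1 = [[GX]]"

definition cG1 :: "(int \<times> agen list) list list" where "cG1 = [[(1, [AX])]]"

definition cWp1 :: "gen list list" where "cWp1 = [[GX]]"

definition cM1 :: "tr list" where "cM1 = [(T 0 E (T 1 E E))]"

lemma cert1: "check 1 (Zl 1) cW1 cG1 cWp1 cM1"
  unfolding cW1_def cG1_def cWp1_def cM1_def by code_simp

definition cW2 :: "gen list list" where "cW2 = [[GX, GY]]"

definition cG2 :: "(int \<times> agen list) list list" where "cG2 = [[((-1), [AU])]]"

definition cWp2 :: "gen list list" where "cWp2 = []"

definition cM2 :: "tr list" where "cM2 = []"

lemma cert2: "check 1 (Zl 2) cW2 cG2 cWp2 cM2"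
  unfolding cW2_def cG2_def cWp2_def cM2_def by code_simp

definition cW3 :: "gen list list" where "cW3 = [[GX, GX, GY]]"

definition cG3 :: "(int \<times> agen list) list list" where "cG3 = [[((-1), [AX, AU])]]"

definition cWp3 :: "gen list list" where "cWp3 = [[GX, GX, GY]]"

definition cM3 :: "tr list" where "cM3 = [(T 0 (T 0 E (T 0 E (T (-1) E E))) (T 0 (T 0 E (T 2 E E)) (T 0 (T (-1) E E) E)))]"

lemma cert3: "check 1 (Zl 3) cW3 cG3 cWp3 cM3"
  unfolding cW3_def cG3_def cWp3_def cM3_def by code_simp

definition cW4 :: "gen list list" where "cW4 = [[GX, GX, GX, GY]]"

definition cG4 :: "(int \<times> agen list) list list" where "cG4 = [[(2, [AX, AU, AX])]]"

definition cWp4 :: "gen list list" where "cWp4 = [[GX, GX, GX, GY], [GX, GX, GY, GY]]"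

definition cM4 :: "tr list" where "cM4 = [(T 0 (T 0 (T 0 E (T 0 E (T (-2) E E))) (T 0 (T 0 E (T 4 E E)) E)) (T 0 (T 0 E (T 0 (T (-4) E E) E)) (T 0 (T 0 (T 2 E E) E) E))), (T 0 (T 0 E (T 0 E (T 0 E (T (-1) E E)))) (T 0 (T 0 E (T 0 E (T 3 E E))) (T 0 (T 0 E (T (-3) E E)) (T 0 (T 1 E E) E))))]"

lemma cert4: "check 2 (Zl 4) cW4 cG4 cWp4 cM4"
  unfolding cW4_def cG4_def cWp4_def cM4_def by code_simp

definition cW5 :: "gen list list" where "cW5 = [[GX, GX, GX, GX, GY], [GX, GX, GY, GX, GY]]"

definition cG5 :: "(int \<times> agen list) list list" where "cG5 = [[((-6), [AX, AU, AX, AX])], [(6, [AX, AU, AU])]]"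

definition cWp5 :: "gen list list" where "cWp5 = [[GX, GX, GX, GX, GY], [GX, GX, GX, GY, GY], [GX, GX, GY, GX, GY], [GX, GX, GY, GY, GY]]"

definition cM5 :: "tr list" where "cM5 = [(T 0 (T 0 (T 0 (T 0 E (T 0 E (T (-6) E E))) (T 0 E (T 0 (T 18 E E) E))) (T 0 (T 0 (T 0 E (T 36 E E)) (T 0 (T (-72) E E) E)) (T 0 (T 0 (T 18 E E) E) E))) (T 0 (T 0 (T 0 (T 0 E (T (-24) E E)) (T 0 (T 36 E E) E)) E) (T 0 (T 0 (T 0 (T (-6) E E) E) E) E))), (T 0 (T 0 (T 0 E (T 0 E (T 0 E (T (-3) E E)))) (T 0 (T 0 E (T 0 E (T 21 E E))) (T 0 (T 0 E (T (-45) E E)) (T 0 (T 30 E E) E)))) (T 0 (T 0 (T 0 E (T 0 E (T (-12) E E))) (T 0 (T 0 E (T 48 E E)) (T 0 (T (-45) E E) E))) (T 0 (T 0 (T 0 E (T (-12) E E)) (T 0 (T 21 E E) E)) (T 0 (T 0 (T (-3) E E) E) E)))), (T 0 (T 0 E (T 0 (T 0 E (T 0 E (T 6 E E))) (T 0 (T 0 E (T (-18) E E)) (T 0 (T 12 E E) E)))) (T 0 (T 0 (T 0 E (T 0 E (T (-6) E E))) (T 0 (T 0 E (T 24 E E)) (T 0 (T (-18) E E) E))) (T 0 (T 0 (T 0 E (T (-6) E E)) (T 0 (T 6 E E) E)) E))), (T 0 (T 0 E (T 0 E (T 0 E (T 0 E (T (-2) E E))))) (T 0 (T 0 E (T 0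 E (T 0 E (T 8 E E)))) (T 0 (T 0 E (T 0 E (T (-12) E E))) (T 0 (T 0 E (T 8 E E)) (T 0 (T (-2) E E) E)))))]"

lemma cert5: "check 6 (Zl 5) cW5 cG5 cWp5 cM5"
  unfolding cW5_def cG5_def cWp5_def cM5_def by code_simp

definition cW6 :: "gen list list" where "cW6 = [[GX, GX, GX, GX, GX, GY], [GX, GX, GX, GY, GX, GY], [GX, GX, GY, GX, GY, GY]]"

definition cG6 :: "(int \<times> agen list) list list" where "cG6 = [[(12, [AX, AU, AX, AX, AX])], [((-12), [AX, AU, AX, AU])], [(12, [AW])]]"

definition cWp6 :: "gen list list" where "cWp6 = [[GX, GX, GX, GX, GX, GY], [GX, GX, GX, GX, GY, GY], [GX, GX, GX, GY, GX, GY], [GX, GX, GX, GY, GY, GY], [GX, GX, GY, GY, GX, GY], [GX, GX, GY, GY, GY, GY]]"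

definition cM6 :: "tr list" where "cM6 = [(T 0 (T 0 (T 0 (T 0 (T 0 E (T 0 E (T (-12) E E))) (T 0 E (T 0 (T 48 E E) E))) (T 0 (T 0 (T 0 E (T 72 E E)) (T 0 (T (-144) E E) E)) E)) (T 0 (T 0 (T 0 (T 0 E (T (-48) E E)) E) (T 0 (T 0 (T 144 E E) E) E)) (T 0 (T 0 (T 0 (T (-48) E E) E) E) E))) (T 0 (T 0 (T 0 (T 0 E (T 0 (T 48 E E) E)) (T 0 (T 0 (T (-72) E E) E) E)) E) (T 0 (T 0 (T 0 (T 0 (T 12 E E) E) E) E) E))), (T 0 (T 0 (T 0 (T 0 E (T 0 E (T 0 E (T (-6) E E)))) (T 0 E (T 0 (T 0 E (T (-6) E E)) (T 0 (T 24 E E) E)))) (T 0 (T 0 (T 0 E (T 0 E (T 60 E E))) (T 0 (T 0 E (T (-72) E E)) (T 0 (T (-48) E E) E))) (T 0 (T 0 (T 0 E (T 18 E E)) (T 0 (T 48 E E) E)) (T 0 (T 0 (T (-24) E E) E) E)))) (T 0 (T 0 (T 0 (T 0 E (T 0 E (T (-42) E E))) (T 0 (T 0 E (T 84 E E)) (T 0 (T (-18) E E) E))) (T 0 (T 0 (T 0 E (T (-84) E E)) (T 0 (T 72 E E) E)) (T 0 (T 0 (T 6 E E) E) E))) (T 0 (T 0 (T 0 (T 0 E (T 42 E E)) (T 0 (T (-60) E E) E)) E) (T 0 (T 0 (T 0 (T 6 E E) E) E) E)))), (T 0 (T 0 (T 0 E (T 0 E (T 0 (T 0 E (T (-12) E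 E)) (T 0 (T 12 E E) E)))) (T 0 (T 0 (T 0 E (T 0 E (T 12 E E))) (T 0 E (T 0 (T (-24) E E) E))) (T 0 (T 0 E (T 0 (T 24 E E) E)) (T 0 (T 0 (T (-12) E E) E) E)))) (T 0 (T 0 (T 0 (T 0 E (T 0 E (T (-12) E E))) (T 0 (T 0 E (T 24 E E)) E)) (T 0 (T 0 (T 0 E (T (-24) E E)) E) (T 0 (T 0 (T 12 E E) E) E))) (T 0 (T 0 (T 0 (T 0 E (T 12 E E)) (T 0 (T (-12) E E) E)) E) E))), (T 0 (T 0 (T 0 E (T 0 E (T 0 E (T 0 E (T (-4) E E))))) (T 0 (T 0 E (T 0 E (T 0 E (T 10 E E)))) (T 0 (T 0 E (T 0 E (T (-6) E E))) (T 0 (T 0 E (T 4 E E)) E)))) (T 0 (T 0 (T 0 E (T 0 E (T 0 E (T 6 E E)))) (T 0 (T 0 E (T 0 E (T (-18) E E))) (T 0 E (T 0 (T (-4) E E) E)))) (T 0 (T 0 E (T 0 (T 0 E (T 18 E E)) (T 0 (T 6 E E) E))) (T 0 (T 0 (T 0 E (T (-6) E E)) (T 0 (T (-10) E E) E)) (T 0 (T 0 (T 4 E E) E) E))))), (T 0 (T 0 E (T 0 (T 0 E (T 0 E (T 0 E (T 6 E E)))) (T 0 (T 0 E (T 0 E (T (-18) E E))) (T 0 (T 0 E (T 12 E E)) E)))) (T 0 (T 0 (T 0 E (T 0 E (T 0 E (T (-6) E E)))) (T 0 (T 0 E (T 0 E (T 18 E E))) (T 0 E (T 0 (T (-12) E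 E) E)))) (T 0 (T 0 E (T 0 (T 0 E (T (-18) E E)) (T 0 (T 18 E E) E))) (T 0 (T 0 (T 0 E (T 6 E E)) (T 0 (T (-6) E E) E)) E)))), (T 0 (T 0 E (T 0 E (T 0 E (T 0 E (T 0 E (T (-3) E E)))))) (T 0 (T 0 E (T 0 E (T 0 E (T 0 E (T 15 E E))))) (T 0 (T 0 E (T 0 E (T 0 E (T (-30) E E)))) (T 0 (T 0 E (T 0 E (T 30 E E))) (T 0 (T 0 E (T (-15) E E)) (T 0 (T 3 E E) E))))))]"

lemma cert6: "check 12 (Zl 6) cW6 cG6 cWp6 cM6"
  unfolding cW6_def cG6_def cWp6_def cM6_def by code_simp

definition cW7 :: "gen list list" where "cW7 = [[GX, GX, GX, GX, GX, GX, GY], [GX, GX, GX, GX, GY, GX, GY], [GX, GX, GX, GY, GX, GX, GY], [GX, GX, GY, GX, GY, GX, GY], [GX, GX, GX, GY, GX, GY, GY]]"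

definition cG7 :: "(int \<times> agen list) list list" where "cG7 = [[((-60), [AX, AU, AX, AX, AX, AX])], [((-180), [AX, AU, AX, AX, AU]), (240, [AX, AU, AX, AU, AX])], [((-60), [AX, AU, AX, AX, AU]), (60, [AX, AU, AX, AU, AX])], [((-60), [AX, AU, AU, AU])], [(240, [AX, AU, AU, AU]), (60, [AX, AW])]]"

definition cWp7 :: "gen list list" where "cWp7 = [[GX, GX, GX, GX, GX, GX, GY], [GX, GX, GX, GX, GX, GY, GY], [GX, GX, GX, GX, GY, GX, GY], [GX, GX, GX, GY, GX, GX, GY], [GX, GX, GX, GX, GY, GY, GY], [GX, GX, GX, GY, GX, GY, GY], [GX, GX, GX, GY, GY, GX, GY], [GX, GX, GY, GX, GX, GY, GY], [GX, GX, GX, GY, GY, GY, GY], [GX, GX, GY, GX, GY, GX, GY], [GX, GX, GY, GX, GY, GY, GY], [GX, GX, GY, GY, GY, GX, GY], [GX, GX, GY, GY, GY, GY, GY]]"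

definition cM7 :: "tr list" where "cM7 = [(T 0 (T 0 (T 0 (T 0 (T 0 (T 0 E (T 0 E (T (-60) E E))) (T 0 E (T 0 (T 300 E E) E))) (T 0 E (T 0 (T 0 (T (-600) E E) E) E))) (T 0 (T 0 (T 0 (T 0 E (T 1200 E E)) (T 0 (T (-3600) E E) E)) (T 0 (T 0 (T 3600 E E) E) E)) (T 0 (T 0 (T 0 (T (-600) E E) E) E) E))) (T 0 (T 0 (T 0 (T 0 (T 0 E (T (-1800) E E)) (T 0 (T 4800 E E) E)) (T 0 (T 0 (T (-3600) E E) E) E)) E) (T 0 (T 0 (T 0 (T 0 (T 300 E E) E) E) E) E))) (T 0 (T 0 (T 0 (T 0 (T 0 (T 0 E (T 720 E E)) (T 0 (T (-1800) E E) E)) (T 0 (T 0 (T 1200 E E) E) E)) E) E) (T 0 (T 0 (T 0 (T 0 (T 0 (T (-60) E E) E) E) E) E) E))), (T 0 (T 0 (T 0 (T 0 (T 0 E (T 0 E (T 0 E (T (-30) E E)))) (T 0 E (T 0 (T 0 E (T (-30) E E)) (T 0 (T 150 E E) E)))) (T 0 (T 0 (T 0 E (T 0 E (T 660 E E))) (T 0 E (T 0 (T (-1320) E E) E))) (T 0 (T 0 (T 0 E (T (-1350) E E)) (T 0 (T 2790 E E) E)) (T 0 (T 0 (T (-960) E E) E) E)))) (T 0 (T 0 (T 0 (T 0 E (T 0 E (T (-930) E E))) (T 0 (T 0 E (T (-2460) E E)) (T 0 (T 3930 E E) E))) (T 0 (T 0 (T 0 E (T 7860 E E)) (T 0 (T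 (-10800) E E) E)) (T 0 (T 0 (T 2790 E E) E) E))) (T 0 (T 0 (T 0 (T 0 E (T (-3030) E E)) (T 0 (T 3930 E E) E)) (T 0 (T 0 (T (-1320) E E) E) E)) (T 0 (T 0 (T 0 (T 150 E E) E) E) E)))) (T 0 (T 0 (T 0 (T 0 (T 0 E (T 0 E (T 360 E E))) (T 0 (T 0 E (T 2520 E E)) (T 0 (T (-3030) E E) E))) (T 0 (T 0 (T 0 E (T (-6480) E E)) (T 0 (T 7860 E E) E)) (T 0 (T 0 (T (-1350) E E) E) E))) (T 0 (T 0 (T 0 (T 0 E (T 2520 E E)) (T 0 (T (-2460) E E) E)) E) (T 0 (T 0 (T 0 (T (-30) E E) E) E) E))) (T 0 (T 0 (T 0 (T 0 (T 0 E (T 360 E E)) (T 0 (T (-930) E E) E)) (T 0 (T 0 (T 660 E E) E) E)) E) (T 0 (T 0 (T 0 (T 0 (T (-30) E E) E) E) E) E)))), (T 0 (T 0 (T 0 (T 0 E (T 0 E (T 0 (T 0 E (T (-60) E E)) (T 0 (T 60 E E) E)))) (T 0 (T 0 (T 0 E (T 0 E (T 240 E E))) (T 0 E (T 0 (T (-480) E E) E))) (T 0 (T 0 (T 0 E (T (-540) E E)) (T 0 (T 1260 E E) E)) (T 0 (T 0 (T (-480) E E) E) E)))) (T 0 (T 0 (T 0 (T 0 E (T 0 E (T (-420) E E))) (T 0 (T 0 E (T (-600) E E)) (T 0 (T 1380 E E) E))) (T 0 (T 0 (T 0 E (T 2760 E E)) (T 0 (T (-4320) E E) E)) (T 0 (T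 0 (T 1260 E E) E) E))) (T 0 (T 0 (T 0 (T 0 E (T (-1020) E E)) (T 0 (T 1380 E E) E)) (T 0 (T 0 (T (-480) E E) E) E)) (T 0 (T 0 (T 0 (T 60 E E) E) E) E)))) (T 0 (T 0 (T 0 (T 0 (T 0 E (T 0 E (T 180 E E))) (T 0 (T 0 E (T 720 E E)) (T 0 (T (-1020) E E) E))) (T 0 (T 0 (T 0 E (T (-2160) E E)) (T 0 (T 2760 E E) E)) (T 0 (T 0 (T (-540) E E) E) E))) (T 0 (T 0 (T 0 (T 0 E (T 720 E E)) (T 0 (T (-600) E E) E)) E) (T 0 (T 0 (T 0 (T (-60) E E) E) E) E))) (T 0 (T 0 (T 0 (T 0 (T 0 E (T 180 E E)) (T 0 (T (-420) E E) E)) (T 0 (T 0 (T 240 E E) E) E)) E) E))), (T 0 (T 0 (T 0 E (T 0 (T 0 (T 0 E (T 0 E (T 60 E E))) (T 0 E (T 0 (T (-120) E E) E))) (T 0 (T 0 (T 0 E (T (-180) E E)) (T 0 (T 360 E E) E)) (T 0 (T 0 (T (-120) E E) E) E)))) (T 0 (T 0 (T 0 (T 0 E (T 0 E (T (-120) E E))) (T 0 (T 0 E (T (-240) E E)) (T 0 (T 480 E E) E))) (T 0 (T 0 (T 0 E (T 960 E E)) (T 0 (T (-1440) E E) E)) (T 0 (T 0 (T 360 E E) E) E))) (T 0 (T 0 (T 0 (T 0 E (T (-360) E E)) (T 0 (T 480 E E) E)) (T 0 (T 0 (T (-120) E E) E) E)) E))) (T 0 (T 0 (T 0 (T 0 (T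 0 E (T 0 E (T 60 E E))) (T 0 (T 0 E (T 240 E E)) (T 0 (T (-360) E E) E))) (T 0 (T 0 (T 0 E (T (-720) E E)) (T 0 (T 960 E E) E)) (T 0 (T 0 (T (-180) E E) E) E))) (T 0 (T 0 (T 0 (T 0 E (T 240 E E)) (T 0 (T (-240) E E) E)) E) E)) (T 0 (T 0 (T 0 (T 0 (T 0 E (T 60 E E)) (T 0 (T (-120) E E) E)) (T 0 (T 0 (T 60 E E) E) E)) E) E))), (T 0 (T 0 (T 0 (T 0 E (T 0 E (T 0 E (T 0 E (T (-20) E E))))) (T 0 (T 0 E (T 0 E (T 0 E (T (-220) E E)))) (T 0 (T 0 E (T 0 E (T 640 E E))) (T 0 (T 0 E (T (-650) E E)) (T 0 (T 290 E E) E))))) (T 0 (T 0 (T 0 E (T 0 E (T 0 E (T 710 E E)))) (T 0 (T 0 E (T 0 E (T (-2210) E E))) (T 0 (T 0 E (T 3340 E E)) (T 0 (T (-2110) E E) E)))) (T 0 (T 0 (T 0 E (T 0 E (T 500 E E))) (T 0 (T 0 E (T (-3130) E E)) (T 0 (T 3060 E E) E))) (T 0 (T 0 (T 0 E (T 1600 E E)) (T 0 (T (-2110) E E) E)) (T 0 (T 0 (T 290 E E) E) E))))) (T 0 (T 0 (T 0 (T 0 E (T 0 E (T 0 E (T (-410) E E)))) (T 0 (T 0 E (T 0 E (T 1590 E E))) (T 0 (T 0 E (T (-2670) E E)) (T 0 (T 1600 E E) E)))) (T 0 (T 0 (T 0 E (T 0 E (T (-920) E E))) (T 0 (T 0 E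 (T 4000 E E)) (T 0 (T (-3130) E E) E))) (T 0 (T 0 (T 0 E (T (-2670) E E)) (T 0 (T 3340 E E) E)) (T 0 (T 0 (T (-650) E E) E) E)))) (T 0 (T 0 (T 0 (T 0 E (T 0 E (T 280 E E))) (T 0 (T 0 E (T (-920) E E)) (T 0 (T 500 E E) E))) (T 0 (T 0 (T 0 E (T 1590 E E)) (T 0 (T (-2210) E E) E)) (T 0 (T 0 (T 640 E E) E) E))) (T 0 (T 0 (T 0 (T 0 E (T (-410) E E)) (T 0 (T 710 E E) E)) (T 0 (T 0 (T (-220) E E) E) E)) (T 0 (T 0 (T 0 (T (-20) E E) E) E) E))))), (T 0 (T 0 (T 0 E (T 0 (T 0 E (T 0 E (T 0 E (T (-120) E E)))) (T 0 (T 0 E (T 0 E (T 300 E E))) (T 0 (T 0 E (T (-300) E E)) (T 0 (T 120 E E) E))))) (T 0 (T 0 (T 0 E (T 0 E (T 0 E (T 300 E E)))) (T 0 (T 0 E (T 0 E (T (-1020) E E))) (T 0 (T 0 E (T 1800 E E)) (T 0 (T (-1140) E E) E)))) (T 0 (T 0 (T 0 E (T 0 E (T 300 E E))) (T 0 (T 0 E (T (-1980) E E)) (T 0 (T 1800 E E) E))) (T 0 (T 0 (T 0 E (T 960 E E)) (T 0 (T (-1140) E E) E)) (T 0 (T 0 (T 120 E E) E) E))))) (T 0 (T 0 (T 0 (T 0 E (T 0 E (T 0 E (T (-180) E E)))) (T 0 (T 0 E (T 0 E (T 780 E E))) (T 0 (T 0 E (T (-1500) E E)) (T 0 (T 960 E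 E) E)))) (T 0 (T 0 (T 0 E (T 0 E (T (-480) E E))) (T 0 (T 0 E (T 2400 E E)) (T 0 (T (-1980) E E) E))) (T 0 (T 0 (T 0 E (T (-1500) E E)) (T 0 (T 1800 E E) E)) (T 0 (T 0 (T (-300) E E) E) E)))) (T 0 (T 0 (T 0 (T 0 E (T 0 E (T 120 E E))) (T 0 (T 0 E (T (-480) E E)) (T 0 (T 300 E E) E))) (T 0 (T 0 (T 0 E (T 780 E E)) (T 0 (T (-1020) E E) E)) (T 0 (T 0 (T 300 E E) E) E))) (T 0 (T 0 (T 0 (T 0 E (T (-180) E E)) (T 0 (T 300 E E) E)) (T 0 (T 0 (T (-120) E E) E) E)) E)))), (T 0 (T 0 (T 0 E (T 0 E (T 0 E (T 0 (T 0 E (T (-30) E E)) (T 0 (T 30 E E) E))))) (T 0 (T 0 (T 0 E (T 0 E (T 0 E (T 30 E E)))) (T 0 (T 0 E (T 0 E (T (-210) E E))) (T 0 (T 0 E (T 660 E E)) (T 0 (T (-510) E E) E)))) (T 0 (T 0 (T 0 E (T 0 E (T 120 E E))) (T 0 (T 0 E (T (-930) E E)) (T 0 (T 900 E E) E))) (T 0 (T 0 (T 0 E (T 420 E E)) (T 0 (T (-510) E E) E)) (T 0 (T 0 (T 30 E E) E) E))))) (T 0 (T 0 (T 0 (T 0 E (T 0 E (T 0 E (T (-30) E E)))) (T 0 (T 0 E (T 0 E (T 210 E E))) (T 0 (T 0 E (T (-570) E E)) (T 0 (T 420 E E) E)))) (T 0 (T 0 (T 0 E (T 0 E (T (-120)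 E E))) (T 0 (T 0 E (T 960 E E)) (T 0 (T (-930) E E) E))) (T 0 (T 0 (T 0 E (T (-570) E E)) (T 0 (T 660 E E) E)) (T 0 (T 0 (T (-30) E E) E) E)))) (T 0 (T 0 (T 0 E (T 0 (T 0 E (T (-120) E E)) (T 0 (T 120 E E) E))) (T 0 (T 0 (T 0 E (T 210 E E)) (T 0 (T (-210) E E) E)) E)) (T 0 (T 0 (T 0 (T 0 E (T (-30) E E)) (T 0 (T 30 E E) E)) E) E)))), (T 0 (T 0 (T 0 E (T 0 (T 0 E (T 0 E (T 0 E (T (-30) E E)))) (T 0 (T 0 E (T 0 E (T 90 E E))) (T 0 (T 0 E (T (-90) E E)) (T 0 (T 30 E E) E))))) (T 0 (T 0 (T 0 E (T 0 E (T 0 E (T 60 E E)))) (T 0 (T 0 E (T 0 E (T (-300) E E))) (T 0 (T 0 E (T 660 E E)) (T 0 (T (-420) E E) E)))) (T 0 (T 0 (T 0 E (T 0 E (T 120 E E))) (T 0 (T 0 E (T (-840) E E)) (T 0 (T 720 E E) E))) (T 0 (T 0 (T 0 E (T 390 E E)) (T 0 (T (-420) E E) E)) (T 0 (T 0 (T 30 E E) E) E))))) (T 0 (T 0 (T 0 (T 0 E (T 0 E (T 0 E (T (-30) E E)))) (T 0 (T 0 E (T 0 E (T 210 E E))) (T 0 (T 0 E (T (-570) E E)) (T 0 (T 390 E E) E)))) (T 0 (T 0 (T 0 E (T 0 E (T (-120) E E))) (T 0 (T 0 E (T 960 E E)) (T 0 (T (-840) E E) E))) (T 0 (T 0 (T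 0 E (T (-570) E E)) (T 0 (T 660 E E) E)) (T 0 (T 0 (T (-90) E E) E) E)))) (T 0 (T 0 (T 0 E (T 0 (T 0 E (T (-120) E E)) (T 0 (T 120 E E) E))) (T 0 (T 0 (T 0 E (T 210 E E)) (T 0 (T (-300) E E) E)) (T 0 (T 0 (T 90 E E) E) E))) (T 0 (T 0 (T 0 (T 0 E (T (-30) E E)) (T 0 (T 60 E E) E)) (T 0 (T 0 (T (-30) E E) E) E)) E)))), (T 0 (T 0 (T 0 E (T 0 E (T 0 E (T 0 E (T 0 E (T (-15) E E)))))) (T 0 (T 0 E (T 0 E (T 0 E (T 0 E (T (-280) E E))))) (T 0 (T 0 E (T 0 E (T 0 E (T 1105 E E)))) (T 0 (T 0 E (T 0 E (T (-1320) E E))) (T 0 (T 0 E (T 875 E E)) (T 0 (T (-350) E E) E)))))) (T 0 (T 0 (T 0 E (T 0 E (T 0 E (T 0 E (T 355 E E))))) (T 0 (T 0 E (T 0 E (T 0 E (T (-1090) E E)))) (T 0 (T 0 E (T 0 E (T 645 E E))) (T 0 (T 0 E (T (-860) E E)) (T 0 (T 875 E E) E))))) (T 0 (T 0 (T 0 E (T 0 E (T 0 E (T (-165) E E)))) (T 0 (T 0 E (T 0 E (T 990 E E))) (T 0 (T 0 E (T 645 E E)) (T 0 (T (-1320) E E) E)))) (T 0 (T 0 (T 0 E (T 0 E (T (-165) E E))) (T 0 (T 0 E (T (-1090) E E)) (T 0 (T 1105 E E) E))) (T 0 (T 0 (T 0 E (T 355 E E)) (T 0 (T (-280) E E) E))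 (T 0 (T 0 (T (-15) E E) E) E)))))), (T 0 (T 0 E (T 0 (T 0 E (T 0 (T 0 E (T 0 E (T (-60) E E))) (T 0 (T 0 E (T 240 E E)) (T 0 (T (-180) E E) E)))) (T 0 (T 0 (T 0 E (T 0 E (T 60 E E))) (T 0 (T 0 E (T (-420) E E)) (T 0 (T 360 E E) E))) (T 0 (T 0 (T 0 E (T 180 E E)) (T 0 (T (-180) E E) E)) E)))) (T 0 (T 0 (T 0 E (T 0 (T 0 E (T 0 E (T 60 E E))) (T 0 (T 0 E (T (-240) E E)) (T 0 (T 180 E E) E)))) (T 0 (T 0 (T 0 E (T 0 E (T (-60) E E))) (T 0 (T 0 E (T 480 E E)) (T 0 (T (-420) E E) E))) (T 0 (T 0 (T 0 E (T (-240) E E)) (T 0 (T 240 E E) E)) E))) (T 0 (T 0 (T 0 E (T 0 (T 0 E (T (-60) E E)) (T 0 (T 60 E E) E))) (T 0 (T 0 (T 0 E (T 60 E E)) (T 0 (T (-60) E E) E)) E)) E))), (T 0 (T 0 E (T 0 (T 0 E (T 0 E (T 0 E (T 0 E (T (-140) E E))))) (T 0 (T 0 E (T 0 E (T 0 E (T 500 E E)))) (T 0 (T 0 E (T 0 E (T (-600) E E))) (T 0 (T 0 E (T 400 E E)) (T 0 (T (-160) E E) E)))))) (T 0 (T 0 (T 0 E (T 0 E (T 0 E (T 0 E (T 140 E E))))) (T 0 (T 0 E (T 0 E (T 0 E (T (-440) E E)))) (T 0 (T 0 E (T 0 E (T 300 E E))) (T 0 (T 0 E (T (-400) E E)) (T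 0 (T 400 E E) E))))) (T 0 (T 0 (T 0 E (T 0 E (T 0 E (T (-60) E E)))) (T 0 (T 0 E (T 0 E (T 360 E E))) (T 0 (T 0 E (T 300 E E)) (T 0 (T (-600) E E) E)))) (T 0 (T 0 (T 0 E (T 0 E (T (-60) E E))) (T 0 (T 0 E (T (-440) E E)) (T 0 (T 500 E E) E))) (T 0 (T 0 (T 0 E (T 140 E E)) (T 0 (T (-140) E E) E)) E))))), (T 0 (T 0 E (T 0 (T 0 E (T 0 E (T 0 E (T 0 E (T 20 E E))))) (T 0 (T 0 E (T 0 E (T 0 E (T (-80) E E)))) (T 0 (T 0 E (T 0 E (T 120 E E))) (T 0 (T 0 E (T (-100) E E)) (T 0 (T 40 E E) E)))))) (T 0 (T 0 (T 0 E (T 0 E (T 0 E (T 0 E (T (-20) E E))))) (T 0 (T 0 E (T 0 E (T 0 E (T 80 E E)))) (T 0 (T 0 E (T 0 E (T (-120) E E))) (T 0 (T 0 E (T 160 E E)) (T 0 (T (-100) E E) E))))) (T 0 (T 0 E (T 0 E (T 0 (T 0 E (T (-120) E E)) (T 0 (T 120 E E) E)))) (T 0 (T 0 E (T 0 (T 0 E (T 80 E E)) (T 0 (T (-80) E E) E))) (T 0 (T 0 (T 0 E (T (-20) E E)) (T 0 (T 20 E E) E)) E))))), (T 0 (T 0 E (T 0 E (T 0 E (T 0 E (T 0 E (T 0 E (T (-12) E E))))))) (T 0 (T 0 E (T 0 E (T 0 E (T 0 E (T 0 E (T 72 E E)))))) (T 0 (T 0 E (T 0 E (T 0 E (T 0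 E (T (-180) E E))))) (T 0 (T 0 E (T 0 E (T 0 E (T 240 E E)))) (T 0 (T 0 E (T 0 E (T (-180) E E))) (T 0 (T 0 E (T 72 E E)) (T 0 (T (-12) E E) E)))))))]"

lemma cert7: "check 60 (Zl 7) cW7 cG7 cWp7 cM7"
  unfolding cW7_def cG7_def cWp7_def cM7_def by code_simp

definition Aset :: "'k::field ncpoly set" where
  "Aset = lie_gen {nc_gen GX,
            nc_bracket (nc_gen GY) (nc_gen GX),
            nc_bracket (nc_bracket (nc_bracket (nc_gen GY) (nc_gen GX)) (nc_gen GY))
                       (nc_bracket (nc_bracket (nc_gen GY) (nc_gen GX)) (nc_gen GX))}"

definition lnbs :: "gen list \<Rightarrow> 'k::field ncpoly" where
  "lnbs z = evt (lnbT z)"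

lemma tzero_lk: "tzero t \<Longrightarrow> lk t w = 0"
  by (induction t arbitrary: w) (auto split: list.split)

lemma lk_foldr_tadd: "lk (foldr tadd ts B) v = sum_list (map (\<lambda>t. lk t v) ts) + lk B v"
  by (induction ts) auto

lemma lk_tsc': "lk (tsc' c t) v = c * lk t v" unfolding tsc'_def by simp

lemma lk_rhs: "lk (rhs L dL Ws Gs Wps Ms) v =
  (\<Sum>x\<leftarrow>zip Ws Gs. lk L (fst x) * lk (snd x) v) + (\<Sum>x\<leftarrow>zip Wps Ms. lk dL (fst x) * lk (snd x) v)"
  unfolding rhs_def by (simp add: lk_foldr_tadd lk_tsc' o_def split_def)

lemma checkz_sound: "checkz N Ws Gs Wps Ms L dL \<Longrightarrow> N * lk L v =
  (\<Sum>x\<leftarrow>zip Ws Gs. lk L (fst x) * lk (snd x) v) + (\<Sum>x\<leftarrow>zip Wps Ms. lk dL (fst x) * lk (snd x) v)"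
  unfolding checkz_def using tzero_lk[of "tadd (tsc N L) (tsc (-1) (rhs L dL Ws Gs Wps Ms))" v]
  by (simp add: lk_rhs)

definition Rf :: "gen list list \<Rightarrow> tr list \<Rightarrow> gen list list \<Rightarrow> tr list \<Rightarrow> 'k::field ncpoly \<Rightarrow> gen list \<Rightarrow> 'k" where
  "Rf Ws Gs Wps Ms q v = (\<Sum>x\<leftarrow>zip Ws Gs. q (fst x) * evt (snd x) v) + (\<Sum>x\<leftarrow>zip Wps Ms. delta q (fst x) * evt (snd x) v)"

lemma of_int_sum_list': "of_int (sum_list (map f xs)) = sum_list (map (\<lambda>x. of_int (f x)) xs)"
  by (induction xs) auto

lemma checkz_sound': "checkz N Ws Gs Wps Ms (lnbT z) (tdelta (lnbT z)) \<Longrightarrow>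
  of_int N * (lnbs z v :: 'k::field) = Rf Ws Gs Wps Ms (lnbs z) v"
proof -
  assume c: "checkz N Ws Gs Wps Ms (lnbT z) (tdelta (lnbT z))"
  let ?L = "lnbT z"
  have "(of_int (N * lk ?L v) :: 'k) = of_int ((\<Sum>x\<leftarrow>zip Ws Gs. lk ?L (fst x) * lk (snd x) v) + (\<Sum>x\<leftarrow>zip Wps Ms. lk (tdelta ?L) (fst x) * lk (snd x) v))"
    using checkz_sound[OF c] by simp
  also have "\<dots> = Rf Ws Gs Wps Ms (lnbs z) v"
    unfolding Rf_def lnbs_def evt_tdelta
    by (simp add: of_int_sum_list' o_def evt_def)
  finally show ?thesis unfolding lnbs_def evt_def by simp
qed

inductive_set zspan :: "gen list list \<Rightarrow> 'k::field ncpoly set" for Zs where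
  zero: "(\<lambda>w. 0) \<in> zspan Zs"
| gen: "z \<in> set Zs \<Longrightarrow> lnbs z \<in> zspan Zs"
| add: "p \<in> zspan Zs \<Longrightarrow> q \<in> zspan Zs \<Longrightarrow> nc_add p q \<in> zspan Zs"
| smult: "p \<in> zspan Zs \<Longrightarrow> nc_smult c p \<in> zspan Zs"

lemma delta_zero: "delta (\<lambda>w. 0) w = 0" unfolding deltaS by simp

lemma delta_add: "delta (nc_add p q) w = delta p w + delta q w"
  unfolding deltaS nc_add_def by (subst sum.distrib[symmetric], rule sum.cong) auto

lemma delta_smult: "delta (nc_smult c p) w = c * delta p w"
  unfolding deltaS nc_smult_def by (subst sum_distrib_left, rule sum.cong) auto

lemma sum_list_addf2: "(\<Sum>x\<leftarrow>xs. (f (fst x) + g (fst x)) * h (snd x) v) = (\<Sum>x\<leftarrow>xs. f (fst x) * h (snd x) v) + (\<Sum>x\<leftarrow>xs. g (fst x) * h (snd x) v)"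
  for f g :: "'a \<Rightarrow> 'k::field"
  by (induction xs) (auto simp: algebra_simps)

lemma sum_list_smult2: "(\<Sum>x\<leftarrow>xs. (c * f (fst x)) * h (snd x) v) = c * (\<Sum>x\<leftarrow>xs. f (fst x) * h (snd x) v)"
  for f :: "'a \<Rightarrow> 'k::field"
  by (induction xs) (auto simp: algebra_simps)

lemma sum_list_zero2: "(\<Sum>x\<leftarrow>xs. (0::'k::field) * h (snd x) v) = 0"
  by (induction xs) auto

lemma Rf_zero: "Rf Ws Gs Wps Ms (\<lambda>w. 0) v = 0"
  unfolding Rf_def delta_zero by (simp add: sum_list_zero2)

lemma Rf_add: "Rf Ws Gs Wps Ms (nc_add p q) v = Rf Ws Gs Wps Ms p v + Rf Ws Gs Wps Ms q v"
proof -
  have "Rf Ws Gs Wps Ms (nc_add p q) v = (\<Sum>x\<leftarrow>zip Ws Gs. (p (fst x) + q (fst x)) * evt (snd x) v) + (\<Sum>x\<leftarrow>zip Wps Ms. (delta p (fst x) + delta q (fst x)) * evt (snd x) v)"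
    unfolding Rf_def delta_add by (simp add: nc_add_def)
  then show ?thesis unfolding Rf_def sum_list_addf2 by (simp add: algebra_simps)
qed

lemma Rf_smult: "Rf Ws Gs Wps Ms (nc_smult c p) v = c * Rf Ws Gs Wps Ms p v"
proof -
  have "Rf Ws Gs Wps Ms (nc_smult c p) v = (\<Sum>x\<leftarrow>zip Ws Gs. (c * p (fst x)) * evt (snd x) v) + (\<Sum>x\<leftarrow>zip Wps Ms. (c * delta p (fst x)) * evt (snd x) v)"
    unfolding Rf_def delta_smult by (simp add: nc_smult_def)
  then show ?thesis unfolding Rf_def sum_list_smult2 by (simp add: algebra_simps)
qed

lemma zspan_Rf:
  assumes "q \<in> zspan Zs" and "checkzs N Ws Gs Wps Ms Zs"
  shows "of_int N * q v = Rf Ws Gs Wps Ms q v"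
  using assms(1)
proof (induction arbitrary: v rule: zspan.induct)
  case zero
  then show ?case by (simp add: Rf_zero)
next
  case (gen z)
  then show ?case using assms(2) checkz_sound' unfolding checkzs_def list_all_iff by blast
next
  case (add p q)
  then show ?case unfolding Rf_add by (simp add: nc_add_def algebra_simps)
next
  case (smult p c)
  then show ?case unfolding Rf_smult by (simp add: nc_smult_def algebra_simps)
qed

lemma zero_Aset: "(\<lambda>w. 0) \<in> (Aset :: 'k::field ncpoly set)"
proof -
  have "nc_smult 0 (nc_gen GX) \<in> (Aset :: 'k ncpoly set)" unfolding Aset_def by (intro lie_gen.smult lie_gen.base) simp
  moreover have "nc_smult 0 (nc_gen GX) = (\<lambda>w. 0::'k)" unfolding nc_smult_def by simp
  ultimately show ?thesis by simp
qed

lemma Aset_sum: "(\<forall>x\<in>set xs. evt (snd x) \<in> (Aset :: 'k::field ncpoly set)) \<Longrightarrow> (\<lambda>v. \<Sum>x\<leftarrow>xs. f (fst x) * evt (snd x) v) \<in> (Aset :: 'k ncpoly set)"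
proof (induction xs)
  case Nil
  then show ?case using zero_Aset by simp
next
  case (Cons a xs)
  obtain w G where a: "a = (w,G)" by fastforce
  have "nc_add (nc_smult (f w) (evt G)) (\<lambda>v. \<Sum>x\<leftarrow>xs. f (fst x) * evt (snd x) v) \<in> (Aset :: 'k ncpoly set)"
    using Cons unfolding a Aset_def by (intro lie_gen.add lie_gen.smult) auto
  then show ?case unfolding a nc_add_def nc_smult_def by simp
qed

lemma adense_A: "evt (adense a) \<in> (Aset :: 'k::field ncpoly set)"
  by (cases a) (simp_all add: evt_tbr evt_tgen Aset_def lie_gen.base)

lemma foldl_A: "evt P \<in> (Aset :: 'k::field ncpoly set) \<Longrightarrow> evt (foldl (\<lambda>P b. tbr P (adense b)) P r) \<in> (Aset :: 'k ncpoly set)"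
proof (induction r arbitrary: P)
  case Nil
  then show ?case by simp
next
  case (Cons b r)
  have "evt (tbr P (adense b)) \<in> (Aset :: 'k ncpoly set)"
    unfolding evt_tbr using Cons.prems adense_A unfolding Aset_def by (blast intro: lie_gen.bracket)
  then show ?case using Cons.IH by simp
qed

lemma lnA_A: "evt (lnA s) \<in> (Aset :: 'k::field ncpoly set)"
  by (cases s) (simp_all add: evt_E zero_Aset foldl_A adense_A)

lemma gexp_A: "evt (gexp ge) \<in> (Aset :: 'k::field ncpoly set)"
proof (induction ge)
  case Nil
  then show ?case by (simp add: gexp_def evt_E zero_Aset)
next
  case (Cons a ge)
  obtain c s where a: "a = (c,s)" by fastforce
  have "evt (gexp (a#ge)) = nc_add (nc_smult (of_int c) (evt (lnA s))) (evt (gexp ge))"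
    unfolding a gexp_def by (simp add: evt_tadd evt_tsc)
  then show ?case using Cons lnA_A unfolding Aset_def by (metis lie_gen.add lie_gen.smult)
qed

lemma check_sound:
  assumes "check N Zs Ws GE Wps Ms" and "q \<in> zspan Zs" and "delta q = (\<lambda>w. 0)"
  shows "q \<in> (Aset :: 'k::field_char_0 ncpoly set)"
proof -
  have N: "N \<noteq> 0" and cz: "checkzs N Ws (map gexp GE) Wps Ms Zs" using assms(1) unfolding check_def by auto
  have "q = (\<lambda>v. \<Sum>x\<leftarrow>zip Ws (map gexp GE). (1 / of_int N * q (fst x)) * evt (snd x) v)"
  proof
    fix v
    have "of_int N * q v = Rf Ws (map gexp GE) Wps Ms q v" using zspan_Rf[OF assms(2) cz] .
    also have "\<dots> = (\<Sum>x\<leftarrow>zip Ws (map gexp GE). q (fst x) * evt (snd x) v)"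
      unfolding Rf_def assms(3) by (simp add: sum_list_zero2)
    finally have "q v = (1 / of_int N) * (\<Sum>x\<leftarrow>zip Ws (map gexp GE). q (fst x) * evt (snd x) v)"
      using N by (simp add: field_simps)
    also have "\<dots> = (\<Sum>x\<leftarrow>zip Ws (map gexp GE). (1 / of_int N * q (fst x)) * evt (snd x) v)"
      by (rule sum_list_smult2[symmetric])
    finally show "q v = (\<Sum>x\<leftarrow>zip Ws (map gexp GE). (1 / of_int N * q (fst x)) * evt (snd x) v)" .
  qed
  moreover have "(\<lambda>v. \<Sum>x\<leftarrow>zip Ws (map gexp GE). (1 / of_int N * q (fst x)) * evt (snd x) v) \<in> (Aset :: 'k ncpoly set)"
    apply (rule Aset_sum)
    by (fastforce dest!: set_zip_rightD intro: gexp_A)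
  ultimately show ?thesis by simp
qed

lemma nc_bracket_addL: "nc_bracket (nc_add p q) r = nc_add (nc_bracket p r) (nc_bracket q r)"
  unfolding nc_bracket_def nc_add_def by (rule ext) (simp add: nc_mult_addL nc_mult_addR)

lemma nc_bracket_addR: "nc_bracket r (nc_add p q) = nc_add (nc_bracket r p) (nc_bracket r q)"
  unfolding nc_bracket_def nc_add_def by (rule ext) (simp add: nc_mult_addL nc_mult_addR)

lemma nc_bracket_smultL: "nc_bracket (nc_smult c p) r = nc_smult c (nc_bracket p r)"
  unfolding nc_bracket_def nc_smult_def by (rule ext) (simp add: nc_mult_scL nc_mult_scR right_diff_distrib)

lemma nc_bracket_smultR: "nc_bracket r (nc_smult c p) = nc_smult c (nc_bracket r p)"
  unfolding nc_bracket_def nc_smult_def by (rule ext) (simp add: nc_mult_scL nc_mult_scR right_diff_distrib)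

lemma nc_mult_zeroL: "nc_mult (\<lambda>w. 0) q w = 0" unfolding nc_mult_def by simp
lemma nc_mult_zeroR: "nc_mult q (\<lambda>w. 0) w = 0" unfolding nc_mult_def by simp

lemma nc_bracket_zeroL: "nc_bracket (\<lambda>w. 0) r = (\<lambda>w. 0)"
  unfolding nc_bracket_def by (simp add: nc_mult_zeroL nc_mult_zeroR)
lemma nc_bracket_zeroR: "nc_bracket r (\<lambda>w. 0) = (\<lambda>w. 0)"
  unfolding nc_bracket_def by (simp add: nc_mult_zeroL nc_mult_zeroR)

lemma lnbs_single: "lnbs [g] = nc_gen g"
  unfolding lnbs_def by (simp add: evt_tgen)

lemma lnbs_snoc: "z \<noteq> [] \<Longrightarrow> lnbs (z @ [h]) = nc_bracket (lnbs z) (nc_gen h)"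
  unfolding lnbs_def by (cases z) (auto simp: evt_tbr evt_tgen)

lemma foldl_sc: "evt P = nc_smult c (evt Q) \<Longrightarrow>
  evt (foldl (\<lambda>P h. tbr P (tgen h)) P r) = (nc_smult c (evt (foldl (\<lambda>P h. tbr P (tgen h)) Q r)) :: 'k::field ncpoly)"
proof (induction r arbitrary: P Q)
  case Nil
  then show ?case by simp
next
  case (Cons h r)
  have "evt (tbr P (tgen h)) = (nc_smult c (evt (tbr Q (tgen h))) :: 'k ncpoly)"
    unfolding evt_tbr Cons.prems nc_bracket_smultL ..
  then show ?case using Cons.IH by simp
qed

lemma lnbs_gg: "lnbs (g#g#r) = (\<lambda>w. 0 :: 'k::field)"
proof -
  have "evt (tbr (tgen g) (tgen g)) = (nc_smult 0 (evt (tgen g)) :: 'k ncpoly)"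
    unfolding evt_tbr nc_bracket_def nc_smult_def by simp
  then have "(lnbs (g#g#r) :: 'k ncpoly) = nc_smult 0 (evt (foldl (\<lambda>P h. tbr P (tgen h)) (tgen g) r))"
    unfolding lnbs_def using foldl_sc[OF \<open>evt (tbr (tgen g) (tgen g)) = _\<close>] by simp
  then show ?thesis unfolding nc_smult_def by simp
qed

lemma lnbs_yx: "lnbs (GY#GX#r) = (nc_smult (-1) (lnbs (GX#GY#r)) :: 'k::field ncpoly)"
proof -
  have "evt (tbr (tgen GY) (tgen GX)) = (nc_smult (-1) (evt (tbr (tgen GX) (tgen GY))) :: 'k ncpoly)"
    unfolding evt_tbr nc_bracket_def nc_smult_def by (rule ext) simp
  from foldl_sc[OF this] show ?thesis unfolding lnbs_def by simp
qed

inductive_set hspan :: "nat \<Rightarrow> 'k::field ncpoly set" for n where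
  zero: "(\<lambda>w. 0) \<in> hspan n"
| gen: "length z = n \<Longrightarrow> z \<noteq> [] \<Longrightarrow> lnbs z \<in> hspan n"
| add: "p \<in> hspan n \<Longrightarrow> q \<in> hspan n \<Longrightarrow> nc_add p q \<in> hspan n"
| smult: "p \<in> hspan n \<Longrightarrow> nc_smult c p \<in> hspan n"

lemma hspan_diff: "p \<in> hspan n \<Longrightarrow> q \<in> hspan n \<Longrightarrow> (\<lambda>w. p w - q w) \<in> hspan n"
proof -
  assume "p \<in> hspan n" "q \<in> hspan n"
  then have "nc_add p (nc_smult (-1) q) \<in> hspan n" by (intro hspan.add hspan.smult)
  then show ?thesis unfolding nc_add_def nc_smult_def by simp
qed

lemma hspan_br_gen: "q \<in> hspan m \<Longrightarrow> nc_bracket q (nc_gen h) \<in> hspan (Suc m)"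
proof (induction rule: hspan.induct)
  case zero
  then show ?case by (simp add: nc_bracket_zeroL hspan.zero)
next
  case (gen z)
  then show ?case using hspan.gen[of "z @ [h]" "Suc m"] by (simp add: lnbs_snoc)
next
  case (add p q)
  then show ?case by (simp add: nc_bracket_addL hspan.add)
next
  case (smult p c)
  then show ?case by (simp add: nc_bracket_smultL hspan.smult)
qed

lemma hspan_br_lnbs: "z' \<noteq> [] \<Longrightarrow> z \<noteq> [] \<Longrightarrow> nc_bracket (lnbs z) (lnbs z') \<in> (hspan (length z + length z') :: 'k::field ncpoly set)"
proof (induction z' arbitrary: z rule: rev_induct)
  case Nil
  then show ?case by simp
next
  case (snoc h r)
  show ?case
  proof (cases "r = []")
    case True
    then show ?thesis using snoc.prems hspan.gen[of "z @ [h]"] by (simp add: lnbs_snoc lnbs_single)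
  next
    case False
    have j: "(nc_bracket (lnbs z) (lnbs (r @ [h])) :: 'k ncpoly) =
      (\<lambda>w. nc_bracket (nc_bracket (lnbs z) (lnbs r)) (nc_gen h) w - nc_bracket (lnbs (z @ [h])) (lnbs r) w)"
      using False snoc.prems by (simp add: lnbs_snoc fun_eq_iff jacobi)
    have a: "nc_bracket (nc_bracket (lnbs z) (lnbs r)) (nc_gen h) \<in> (hspan (length z + length (r @ [h])) :: 'k ncpoly set)"
      using hspan_br_gen[OF snoc.IH[OF False snoc.prems(2)]] by simp
    have b: "nc_bracket (lnbs (z @ [h])) (lnbs r) \<in> (hspan (length z + length (r @ [h])) :: 'k ncpoly set)"
      using snoc.IH[OF False, of "z @ [h]"] by simp
    show ?thesis unfolding j by (rule hspan_diff[OF a b])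
  qed
qed

lemma hspan_br: "p \<in> hspan i \<Longrightarrow> q \<in> hspan j \<Longrightarrow> nc_bracket p q \<in> hspan (i + j)"
proof (induction p rule: hspan.induct)
  case zero
  then show ?case by (simp add: nc_bracket_zeroL hspan.zero)
next
  case (gen z)
  from gen.prems show ?case
  proof (induction q rule: hspan.induct)
    case zero
    then show ?case by (simp add: nc_bracket_zeroR hspan.zero)
  next
    case (gen z')
    then show ?case using hspan_br_lnbs[of z' z] \<open>length z = i\<close> \<open>z \<noteq> []\<close> by simp
  next
    case (add p q)
    then show ?case by (simp add: nc_bracket_addR hspan.add)
  next
    case (smult p c)
    then show ?case by (simp add: nc_bracket_smultR hspan.smult)
  qed
next
  case (add p p')
  then show ?case by (simp add: nc_bracket_addL hspan.add)
next
  case (smult p c)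
  then show ?case by (simp add: nc_bracket_smultL hspan.smult)
qed

lemma hspan_sum: "finite I \<Longrightarrow> (\<forall>i\<in>I. f i \<in> hspan n) \<Longrightarrow> (\<lambda>w. \<Sum>i\<in>I. f i w) \<in> hspan n"
proof (induction I rule: finite_induct)
  case empty
  then show ?case by (simp add: hspan.zero)
next
  case (insert x F)
  then have "nc_add (f x) (\<lambda>w. \<Sum>i\<in>F. f i w) \<in> hspan n" by (simp add: hspan.add)
  then show ?case using insert by (simp add: nc_add_def)
qed

definition pr :: "nat \<Rightarrow> 'k::field ncpoly \<Rightarrow> 'k ncpoly" where
  "pr n p = (\<lambda>w. if length w = n then p w else 0)"

lemma nc_mult_pr: "nc_mult (pr i p) (pr j q) w = (if length w = i + j then p (take i w) * q (drop i w) else 0)"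
proof -
  have "nc_mult (pr i p) (pr j q) w = (\<Sum>k\<le>length w. if k = i \<and> length w = i + j then p (take i w) * q (drop i w) else 0)"
    unfolding nc_mult_def pr_def by (rule sum.cong) auto
  also have "\<dots> = (if length w = i + j then p (take i w) * q (drop i w) else 0)"
    by (cases "length w = i + j") (simp_all add: sum.delta)
  finally show ?thesis .
qed

lemma sum_rev_atMost: "(\<Sum>i\<le>n. f (n - i)) = (\<Sum>i\<le>(n::nat). (f i :: 'a::comm_monoid_add))"
  by (rule sum.reindex_bij_witness[where i="\<lambda>i. n - i" and j="\<lambda>i. n - i"]) auto

lemma pr_bracket: "pr n (nc_bracket p q) = (\<lambda>w. \<Sum>i\<le>n. nc_bracket (pr i p) (pr (n - i) q) w)"
proof
  fix w
  show "pr n (nc_bracket p q) w = (\<Sum>i\<le>n. nc_bracket (pr i p) (pr (n - i) q) w)"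
  proof (cases "length w = n")
    case True
    have "(\<Sum>i\<le>n. nc_mult (pr i p) (pr (n - i) q) w) = (\<Sum>i\<le>n. p (take i w) * q (drop i w))"
      unfolding nc_mult_pr using True by (intro sum.cong) auto
    also have "\<dots> = nc_mult p q w" unfolding nc_mult_def using True by simp
    finally have 1: "(\<Sum>i\<le>n. nc_mult (pr i p) (pr (n - i) q) w) = nc_mult p q w" .
    have "(\<Sum>i\<le>n. nc_mult (pr (n - i) q) (pr i p) w) = (\<Sum>i\<le>n. q (take (n - i) w) * p (drop (n - i) w))"
      unfolding nc_mult_pr using True by (intro sum.cong) auto
    also have "\<dots> = (\<Sum>i\<le>n. q (take i w) * p (drop i w))"
      by (rule sum_rev_atMost[where f="\<lambda>i. q (take i w) * p (drop i w)"])
    also have "\<dots> = nc_mult q p w" unfolding nc_mult_def using True by simp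
    finally have 2: "(\<Sum>i\<le>n. nc_mult (pr (n - i) q) (pr i p) w) = nc_mult q p w" .
    show ?thesis unfolding nc_bracket_def sum_subtractf 1 2 using True by (simp add: pr_def)
  next
    case False
    then show ?thesis unfolding nc_bracket_def nc_mult_pr by (simp add: pr_def)
  qed
qed

definition FL :: "'k::field ncpoly set" where
  "FL = lie_gen {nc_gen GX, nc_gen GY}"

lemma pr_hspan: "p \<in> lie_gen {nc_gen GX, nc_gen GY} \<Longrightarrow> pr n p \<in> hspan n"
proof (induction arbitrary: n rule: lie_gen.induct)
  case (base p)
  then obtain g where g: "p = nc_gen g" by auto
  show ?case
  proof (cases "n = 1")
    case True
    have "pr n p = lnbs [g]" unfolding g lnbs_single pr_def nc_gen_def using True by auto
    then show ?thesis using hspan.gen[of "[g]" n] True by simp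
  next
    case False
    have "pr n p = (\<lambda>w. 0)" unfolding g pr_def nc_gen_def using False by auto
    then show ?thesis by (simp add: hspan.zero)
  qed
next
  case (add p q)
  have "pr n (nc_add p q) = nc_add (pr n p) (pr n q)" unfolding pr_def nc_add_def by auto
  then show ?case using add by (simp add: hspan.add)
next
  case (smult p c)
  have "pr n (nc_smult c p) = nc_smult c (pr n p)" unfolding pr_def nc_smult_def by auto
  then show ?case using smult by (simp add: hspan.smult)
next
  case (bracket p q)
  have "\<forall>i\<in>{..n}. nc_bracket (pr i p) (pr (n - i) q) \<in> hspan n"
  proof
    fix i assume "i \<in> {..n}"
    then have "i + (n - i) = n" by simp
    then show "nc_bracket (pr i p) (pr (n - i) q) \<in> hspan n"
      using hspan_br[OF bracket.IH(1)[of i] bracket.IH(2)[of "n - i"]] by simp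
  qed
  then show ?case unfolding pr_bracket by (intro hspan_sum) auto
qed

lemma lie_Nil: "p \<in> lie_gen {nc_gen GX, nc_gen GY} \<Longrightarrow> p [] = 0"
  by (induction rule: lie_gen.induct) (auto simp: nc_gen_def nc_add_def nc_smult_def nc_bracket_def nc_mult_Nil)

lemma set_allwords: "set (allwords m) = {w. length w = m}"
proof (induction m)
  case 0
  then show ?case by auto
next
  case (Suc m)
  show ?case
  proof
    show "set (allwords (Suc m)) \<subseteq> {w. length w = Suc m}" using Suc by auto
    show "{w. length w = Suc m} \<subseteq> set (allwords (Suc m))"
    proof
      fix w :: "gen list" assume "w \<in> {w. length w = Suc m}"
      then obtain g v where w: "w = g # v" "length v = m" by (cases w) auto
      then show "w \<in> set (allwords (Suc m))" using Suc by (cases g) auto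
    qed
  qed
qed

lemma hspan_zspan: "q \<in> hspan n \<Longrightarrow> n \<ge> 1 \<Longrightarrow> q \<in> zspan (Zl n)"
proof (induction rule: hspan.induct)
  case zero
  then show ?case by (simp add: zspan.zero)
next
  case (gen z)
  show ?case
  proof (cases "n = 1")
    case True
    then obtain g where "z = [g]" using gen by (cases z) auto
    then show ?thesis using True by (cases g) (auto simp: Zl_def intro: zspan.gen)
  next
    case False
    then obtain g h r where z: "z = g # h # r" and r: "length r = n - 2"
      using gen by (cases z; cases "tl z") auto
    have m: "GX # GY # r \<in> set (Zl n)" using False r by (simp add: Zl_def set_allwords)
    show ?thesis
    proof (cases g; cases h)
      assume "g = GX" "h = GY" then show ?thesis using m z by (simp add: zspan.gen)
    next
      assume "g = GY" "h = GX" then show ?thesis using m z by (simp add: lnbs_yx zspan.gen zspan.smult)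
    qed (simp_all add: z lnbs_gg zspan.zero)
  qed
next
  case (add p q)
  then show ?case by (simp add: zspan.add)
next
  case (smult p c)
  then show ?case by (simp add: zspan.smult)
qed

lemma delta_pr: "delta (pr n p) = pr n (delta p)"
  unfolding pr_def by (rule ext) (simp add: deltaS cong: if_cong)

lemma Aset_sum': "finite I \<Longrightarrow> (\<forall>i\<in>I. f i \<in> (Aset :: 'k::field ncpoly set)) \<Longrightarrow> (\<lambda>w. \<Sum>i\<in>I. f i w) \<in> Aset"
proof (induction I rule: finite_induct)
  case empty
  then show ?case by (simp add: zero_Aset)
next
  case (insert x F)
  then have "nc_add (f x) (\<lambda>w. \<Sum>i\<in>F. f i w) \<in> (Aset :: 'k ncpoly set)" unfolding Aset_def by (simp add: lie_gen.add)
  then show ?case using insert by (simp add: nc_add_def)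
qed

lemma deg_ok:
  assumes "n \<in> {1..7}" "q \<in> zspan (Zl n)" "delta q = (\<lambda>w. 0)"
  shows "q \<in> (Aset :: 'k::field_char_0 ncpoly set)"
proof -
  have "n = 1 \<or> n = 2 \<or> n = 3 \<or> n = 4 \<or> n = 5 \<or> n = 6 \<or> n = 7" using assms(1) by auto
  then show ?thesis
    using check_sound[OF cert1] check_sound[OF cert2] check_sound[OF cert3] check_sound[OF cert4]
      check_sound[OF cert5] check_sound[OF cert6] check_sound[OF cert7] assms(2,3)
    by auto
qed

theorem theorem5p8:
  fixes p :: "'k::field_char_0 ncpoly"
  assumes "p \<in> free_lie"
    and "delta p = (\<lambda>w. 0)"
    and "deg_le 7 p"
  shows "p \<in> lie_gen
           {nc_gen GX,
            nc_bracket (nc_gen GY) (nc_gen GX),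
            nc_bracket (nc_bracket (nc_bracket (nc_gen GY) (nc_gen GX)) (nc_gen GY))
                       (nc_bracket (nc_bracket (nc_gen GY) (nc_gen GX)) (nc_gen GX))}"
proof -
  have pL: "p \<in> lie_gen {nc_gen GX, nc_gen GY}" using assms(1) unfolding free_lie_def .
  have p0: "p [] = 0" using lie_Nil[OF pL] .
  have dec: "p = (\<lambda>w. \<Sum>n\<in>{1..7}. pr n p w)"
  proof
    fix w :: "gen list"
    have s: "(\<Sum>n\<in>{1..7}. pr n p w) = (if length w \<in> {1..7} then p w else 0)"
      unfolding pr_def by (simp add: sum.delta)
    show "p w = (\<Sum>n\<in>{1..7}. pr n p w)"
    proof (cases "length w \<in> {1..7}")
      case True
      then show ?thesis unfolding s by simp
    next
      case False
      then have "w = [] \<or> 7 < length w" by (cases w) auto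
      then show ?thesis unfolding s using False p0 assms(3) unfolding deg_le_def by auto
    qed
  qed
  have each: "\<forall>n\<in>{1..7}. pr n p \<in> (Aset :: 'k ncpoly set)"
  proof
    fix n :: nat assume n: "n \<in> {1..7}"
    have "pr n p \<in> zspan (Zl n)" using hspan_zspan[OF pr_hspan[OF pL]] n by auto
    moreover have "delta (pr n p) = (\<lambda>w. 0)" by (simp only: delta_pr assms(2)) (simp add: pr_def)
    ultimately show "pr n p \<in> Aset" using deg_ok[OF n] by blast
  qed
  have "(\<lambda>w. \<Sum>n\<in>{1..7}. pr n p w) \<in> (Aset :: 'k ncpoly set)"
    by (rule Aset_sum'[OF _ each]) simp
  then show ?thesis using dec unfolding Aset_def by simp
qed

end
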